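(* Let $\mathcal{P}(3^3)$ be the graph whose vertices are the 280 partitions of $\{1,\ldots,9\}$ into three cells each of size three, two such partitions being adjacent if and only if each cell of one partition contains exactly one point from each cell of the other, and let $A$ be its adjacency matrix. Let $M$ be the $280\times 36$ $0/1$-matrix with rows indexed by these partitions and columns indexed by the 2-element subsets of $\{1,\ldots,9\}$, whose entry in row $\pi$ and column $\{i,j\}$ is $1$ if and only if $\{i,j\}$ is contained in a cell of $\pi$. Let $J$ be the $280\times 36$ all-ones matrix. Then every column of $M-\frac14 J$ is an eigenvector of $A$ with eigenvalue $-12$, and the columns of $M-\frac14 J$ span a space of dimension $27$. *)

theory Defs
  imports Complex_Main "HOL-Library.Function_Algebras"
begin

definition parts333 :: "nat set set set" where
  "parts333 = {P. \<Union>P = {1..9} \<and> card P = 3 \<and> (\<forall>c\<in>P. card c = 3)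
                  \<and> (\<forall>c\<in>P. \<forall>d\<in>P. c \<noteq> d \<longrightarrow> c \<inter> d = {})}"

definition adj333 :: "nat set set \<Rightarrow> nat set set \<Rightarrow> bool" where
  "adj333 P Q \<longleftrightarrow> (\<forall>c\<in>P. \<forall>d\<in>Q. card (c \<inter> d) = 1)"

definition pairs9 :: "nat set set" where
  "pairs9 = {e. e \<subseteq> {1..9} \<and> card e = 2}"

definition Mentry :: "nat set set \<Rightarrow> nat set \<Rightarrow> real" where
  "Mentry P e = (if \<exists>c\<in>P. e \<subseteq> c then 1 else 0)"

definition colMJ :: "nat set \<Rightarrow> nat set set \<Rightarrow> real" where
  "colMJ e = (\<lambda>P. if P \<in> parts333 then Mentry P e - 1/4 else 0)"

definition adjA :: "(nat set set \<Rightarrow> real) \<Rightarrow> nat set set \<Rightarrow> real" where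
  "adjA f = (\<lambda>P. if P \<in> parts333 then (\<Sum>Q\<in>{Q\<in>parts333. adj333 P Q}. f Q) else 0)"

end

theory Submission
  imports Defs
begin

lemma I9: "{1..9::nat} = {1,2,3,4,5,6,7,8,9}" by auto

interpretation V: vector_space "\<lambda>(r::real) (f::nat set set \<Rightarrow> real) x. r * f x"
  by unfold_locales (auto simp: fun_eq_iff algebra_simps)

lemma sum_apply: "(sum f A) x = (\<Sum>a\<in>A. f a x)"
  by (induct A rule: infinite_finite_induct) auto

lemma relM:
  assumes P: "P \<in> parts333" and i: "i \<in> {1..9}"
  shows "(\<Sum>j\<in>{1..9}-{i}. Mentry P {i,j}) = 2"
proof -
  have U: "\<Union>P = {1..9}" and c3: "\<And>c. c \<in> P \<Longrightarrow> card c = 3"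
    and dj: "\<And>c d. c \<in> P \<Longrightarrow> d \<in> P \<Longrightarrow> c \<noteq> d \<Longrightarrow> c \<inter> d = {}"
    using P unfolding parts333_def by auto
  obtain c where c: "c \<in> P" "i \<in> c" using i U by blast
  have csub: "c \<subseteq> {1..9}" using c U by blast
  have fc: "finite c" using c3[OF c(1)] card_ge_0_finite by force
  have M: "Mentry P {i,j} = (if j \<in> c then 1 else 0)" for j
  proof -
    have "(\<exists>d\<in>P. {i,j} \<subseteq> d) \<longleftrightarrow> j \<in> c"
      using c dj by blast
    then show ?thesis unfolding Mentry_def by simp
  qed
  have "(\<Sum>j\<in>{1..9}-{i}. Mentry P {i,j}) = (\<Sum>j\<in>{1..9}-{i}. if j \<in> c then 1 else 0)"
    using M by simp
  also have "\<dots> = real (card (({1..9}-{i}) \<inter> c))"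
    by (simp add: sum.If_cases)
  also have "({1..9}-{i}) \<inter> c = c - {i}" using csub by blast
  also have "card (c - {i}) = 2" using c3[OF c(1)] c(2) fc by simp
  finally show ?thesis by simp
qed

lemma relC:
  assumes i: "i \<in> {1..9}"
  shows "(\<Sum>j\<in>{1..9}-{i}. colMJ {i,j} P) = 0"
proof (cases "P \<in> parts333")
  case True
  have "(\<Sum>j\<in>{1..9}-{i}. colMJ {i,j} P)
      = (\<Sum>j\<in>{1..9}-{i}. Mentry P {i,j}) - (\<Sum>j\<in>{1..9}-{i}. 1/4)"
    unfolding colMJ_def using True by (simp add: sum_subtractf)
  also have "\<dots> = 0" using relM[OF True i] i by simp
  finally show ?thesis .
next
  case False
  then show ?thesis unfolding colMJ_def by simp
qed

lemma ins_neq: "a \<notin> B \<Longrightarrow> insert a A \<noteq> B" by auto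

definition E27 :: "nat set set" where "E27 = {{2,4},{2,5},{2,6},{2,7},{2,8},{2,9},{3,4},{3,5},{3,6},{3,7},{3,8},{3,9},{4,5},{4,6},{4,7},{4,8},{4,9},{5,6},{5,7},{5,8},{5,9},{6,7},{6,8},{6,9},{7,8},{7,9},{8,9}}"

lemma filter_insert: "{e \<in> insert a A. Q e} = (if Q a then insert a {e\<in>A. Q e} else {e\<in>A. Q e})"
  by auto

lemma relC2:
  assumes i: "i \<in> {1..9}"
  shows "(\<Sum>e\<in>{e\<in>pairs9. i \<in> e}. colMJ e P) = 0"
proof -
  have im: "(\<lambda>j. {i,j}) ` ({1..9}-{i}) = {e\<in>pairs9. i \<in> e}"
  proof
    show "(\<lambda>j. {i,j}) ` ({1..9}-{i}) \<subseteq> {e\<in>pairs9. i \<in> e}"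
      using i unfolding pairs9_def by auto
    show "{e\<in>pairs9. i \<in> e} \<subseteq> (\<lambda>j. {i,j}) ` ({1..9}-{i})"
    proof
      fix e assume e: "e \<in> {e\<in>pairs9. i \<in> e}"
      then obtain x y where xy: "e = {x,y}" "x \<noteq> y" "e \<subseteq> {1..9}" unfolding pairs9_def by (auto simp: card_2_iff)
      show "e \<in> (\<lambda>j. {i,j}) ` ({1..9}-{i})"
      proof (cases "x = i")
        case True then show ?thesis using xy by auto
      next
        case False then have "y = i" using e xy by auto
        then show ?thesis using xy False by (auto simp: insert_commute)
      qed
    qed
  qed
  have inj: "inj_on (\<lambda>j. {i,j}) ({1..9}-{i})"
    by (auto simp: inj_on_def doubleton_eq_iff)
  have "(\<Sum>e\<in>{e\<in>pairs9. i \<in> e}. colMJ e P) = (\<Sum>j\<in>{1..9}-{i}. colMJ {i,j} P)"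
    unfolding im[symmetric] by (rule sum.reindex_cong[OF inj refl]) simp
  also have "\<dots> = 0" by (rule relC[OF i])
  finally show ?thesis .
qed

lemma pairs9_eq: "pairs9 = {{1,2},{1,3},{1,4},{1,5},{1,6},{1,7},{1,8},{1,9},
  {2,3},{2,4},{2,5},{2,6},{2,7},{2,8},{2,9},{3,4},{3,5},{3,6},{3,7},{3,8},{3,9},
  {4,5},{4,6},{4,7},{4,8},{4,9},{5,6},{5,7},{5,8},{5,9},{6,7},{6,8},{6,9},{7,8},{7,9},{8,9}}"
  (is "_ = ?R")
proof
  show "pairs9 \<subseteq> ?R"
  proof
    fix e assume "e \<in> pairs9"
    then obtain x y where e: "e = {x,y}" "x \<noteq> y" "x \<in> {1..9}" "y \<in> {1..9}"
      unfolding pairs9_def by (auto simp: card_2_iff)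
    then have "x \<in> {1,2,3,4,5,6,7,8,9}" "y \<in> {1,2,3,4,5,6,7,8,9}" unfolding I9 by auto
    then show "e \<in> ?R" unfolding e(1) using e(2) by (simp only: insert_iff empty_iff) (elim disjE; simp add: doubleton_eq_iff)
  qed
  show "?R \<subseteq> pairs9" unfolding pairs9_def by (simp add: I9)
qed

lemma L36: "{{1,2},{1,3},{1,4},{1,5},{1,6},{1,7},{1,8},{1,9},
  {2,3},{2,4},{2,5},{2,6},{2,7},{2,8},{2,9},{3,4},{3,5},{3,6},{3,7},{3,8},{3,9},
  {4,5},{4,6},{4,7},{4,8},{4,9},{5,6},{5,7},{5,8},{5,9},{6,7},{6,8},{6,9},{7,8},{7,9},{8,9::nat}} =
  set [{1,2},{1,3},{1,4},{1,5},{1,6},{1,7},{1,8},{1,9},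
  {2,3},{2,4},{2,5},{2,6},{2,7},{2,8},{2,9},{3,4},{3,5},{3,6},{3,7},{3,8},{3,9},
  {4,5},{4,6},{4,7},{4,8},{4,9},{5,6},{5,7},{5,8},{5,9},{6,7},{6,8},{6,9},{7,8},{7,9},{8,9}]"
  by simp

lemma spE: "e \<in> E27 \<Longrightarrow> colMJ e \<in> V.span (colMJ ` E27)"
  by (intro V.span_base imageI)

lemma rel1: "colMJ {1,2} P + colMJ {1,3} P + colMJ {1,4} P + colMJ {1,5} P + colMJ {1,6} P + colMJ {1,7} P + colMJ {1,8} P + colMJ {1,9} P = 0"
  using relC2[of 1 P] unfolding pairs9_eq L36 set_filter[symmetric] by (simp add: doubleton_eq_iff)
lemma rel2: "colMJ {1,2} P + colMJ {2,3} P + colMJ {2,4} P + colMJ {2,5} P + colMJ {2,6} P + colMJ {2,7} P + colMJ {2,8} P + colMJ {2,9} P = 0"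
  using relC2[of 2 P] unfolding pairs9_eq L36 set_filter[symmetric] by (simp add: doubleton_eq_iff)
lemma rel3: "colMJ {1,3} P + colMJ {2,3} P + colMJ {3,4} P + colMJ {3,5} P + colMJ {3,6} P + colMJ {3,7} P + colMJ {3,8} P + colMJ {3,9} P = 0"
  using relC2[of 3 P] unfolding pairs9_eq L36 set_filter[symmetric] by (simp add: doubleton_eq_iff)
lemma rel4: "colMJ {1,4} P + colMJ {2,4} P + colMJ {3,4} P + colMJ {4,5} P + colMJ {4,6} P + colMJ {4,7} P + colMJ {4,8} P + colMJ {4,9} P = 0"
  using relC2[of 4 P] unfolding pairs9_eq L36 set_filter[symmetric] by (simp add: doubleton_eq_iff)
lemma rel5: "colMJ {1,5} P + colMJ {2,5} P + colMJ {3,5} P + colMJ {4,5} P + colMJ {5,6} P + colMJ {5,7} P + colMJ {5,8} P + colMJ {5,9} P = 0"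
  using relC2[of 5 P] unfolding pairs9_eq L36 set_filter[symmetric] by (simp add: doubleton_eq_iff)
lemma rel6: "colMJ {1,6} P + colMJ {2,6} P + colMJ {3,6} P + colMJ {4,6} P + colMJ {5,6} P + colMJ {6,7} P + colMJ {6,8} P + colMJ {6,9} P = 0"
  using relC2[of 6 P] unfolding pairs9_eq L36 set_filter[symmetric] by (simp add: doubleton_eq_iff)
lemma rel7: "colMJ {1,7} P + colMJ {2,7} P + colMJ {3,7} P + colMJ {4,7} P + colMJ {5,7} P + colMJ {6,7} P + colMJ {7,8} P + colMJ {7,9} P = 0"
  using relC2[of 7 P] unfolding pairs9_eq L36 set_filter[symmetric] by (simp add: doubleton_eq_iff)
lemma rel8: "colMJ {1,8} P + colMJ {2,8} P + colMJ {3,8} P + colMJ {4,8} P + colMJ {5,8} P + colMJ {6,8} P + colMJ {7,8} P + colMJ {8,9} P = 0"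
  using relC2[of 8 P] unfolding pairs9_eq L36 set_filter[symmetric] by (simp add: doubleton_eq_iff)
lemma rel9: "colMJ {1,9} P + colMJ {2,9} P + colMJ {3,9} P + colMJ {4,9} P + colMJ {5,9} P + colMJ {6,9} P + colMJ {7,9} P + colMJ {8,9} P = 0"
  using relC2[of 9 P] unfolding pairs9_eq L36 set_filter[symmetric] by (simp add: doubleton_eq_iff)
lemma sp1_4: "colMJ {1,4} \<in> V.span (colMJ ` E27)"
proof -
  have "colMJ {1,4} = - (colMJ {2,4} + colMJ {3,4} + colMJ {4,5} + colMJ {4,6} + colMJ {4,7} + colMJ {4,8} + colMJ {4,9})" (is "?l = ?r")
  proof (rule ext)
    fix P show "?l P = ?r P" using rel4[of P] by (simp; linarith)
  qed
  then show ?thesis by (simp only:) (intro V.span_neg V.span_add; rule spE, simp add: E27_def)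
qed
lemma sp1_5: "colMJ {1,5} \<in> V.span (colMJ ` E27)"
proof -
  have "colMJ {1,5} = - (colMJ {2,5} + colMJ {3,5} + colMJ {4,5} + colMJ {5,6} + colMJ {5,7} + colMJ {5,8} + colMJ {5,9})" (is "?l = ?r")
  proof (rule ext)
    fix P show "?l P = ?r P" using rel5[of P] by (simp; linarith)
  qed
  then show ?thesis by (simp only:) (intro V.span_neg V.span_add; rule spE, simp add: E27_def)
qed
lemma sp1_6: "colMJ {1,6} \<in> V.span (colMJ ` E27)"
proof -
  have "colMJ {1,6} = - (colMJ {2,6} + colMJ {3,6} + colMJ {4,6} + colMJ {5,6} + colMJ {6,7} + colMJ {6,8} + colMJ {6,9})" (is "?l = ?r")
  proof (rule ext)
    fix P show "?l P = ?r P" using rel6[of P] by (simp; linarith)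
  qed
  then show ?thesis by (simp only:) (intro V.span_neg V.span_add; rule spE, simp add: E27_def)
qed
lemma sp1_7: "colMJ {1,7} \<in> V.span (colMJ ` E27)"
proof -
  have "colMJ {1,7} = - (colMJ {2,7} + colMJ {3,7} + colMJ {4,7} + colMJ {5,7} + colMJ {6,7} + colMJ {7,8} + colMJ {7,9})" (is "?l = ?r")
  proof (rule ext)
    fix P show "?l P = ?r P" using rel7[of P] by (simp; linarith)
  qed
  then show ?thesis by (simp only:) (intro V.span_neg V.span_add; rule spE, simp add: E27_def)
qed
lemma sp1_8: "colMJ {1,8} \<in> V.span (colMJ ` E27)"
proof -
  have "colMJ {1,8} = - (colMJ {2,8} + colMJ {3,8} + colMJ {4,8} + colMJ {5,8} + colMJ {6,8} + colMJ {7,8} + colMJ {8,9})" (is "?l = ?r")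
  proof (rule ext)
    fix P show "?l P = ?r P" using rel8[of P] by (simp; linarith)
  qed
  then show ?thesis by (simp only:) (intro V.span_neg V.span_add; rule spE, simp add: E27_def)
qed
lemma sp1_9: "colMJ {1,9} \<in> V.span (colMJ ` E27)"
proof -
  have "colMJ {1,9} = - (colMJ {2,9} + colMJ {3,9} + colMJ {4,9} + colMJ {5,9} + colMJ {6,9} + colMJ {7,9} + colMJ {8,9})" (is "?l = ?r")
  proof (rule ext)
    fix P show "?l P = ?r P" using rel9[of P] by (simp; linarith)
  qed
  then show ?thesis by (simp only:) (intro V.span_neg V.span_add; rule spE, simp add: E27_def)
qed
lemma sp_12: "colMJ {1,2} \<in> V.span (colMJ ` E27)"
proof -
  have "colMJ {1,2} = (\<lambda>r f x. r * f x) (1/2) ((colMJ {3,4} + colMJ {3,5} + colMJ {3,6} + colMJ {3,7} + colMJ {3,8} + colMJ {3,9}) - (colMJ {2,4} + colMJ {2,5} + colMJ {2,6} + colMJ {2,7} + colMJ {2,8} + colMJ {2,9}) - (colMJ {1,4} + colMJ {1,5} + colMJ {1,6} + colMJ {1,7} + colMJ {1,8} + colMJ {1,9}))" (is "?l = ?r")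
  proof (rule ext)
    fix P show "?l P = ?r P" using rel1[of P] rel2[of P] rel3[of P] by (simp; linarith)
  qed
  then show ?thesis by (simp only:) (intro V.span_scale V.span_diff V.span_add; (rule sp1_4 sp1_5 sp1_6 sp1_7 sp1_8 sp1_9 | (rule spE, simp add: E27_def)))
qed
lemma sp_13: "colMJ {1,3} \<in> V.span (colMJ ` E27)"
proof -
  have "colMJ {1,3} = (\<lambda>r f x. r * f x) (1/2) ((colMJ {2,4} + colMJ {2,5} + colMJ {2,6} + colMJ {2,7} + colMJ {2,8} + colMJ {2,9}) - (colMJ {3,4} + colMJ {3,5} + colMJ {3,6} + colMJ {3,7} + colMJ {3,8} + colMJ {3,9}) - (colMJ {1,4} + colMJ {1,5} + colMJ {1,6} + colMJ {1,7} + colMJ {1,8} + colMJ {1,9}))" (is "?l = ?r")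
  proof (rule ext)
    fix P show "?l P = ?r P" using rel1[of P] rel2[of P] rel3[of P] by (simp; linarith)
  qed
  then show ?thesis by (simp only:) (intro V.span_scale V.span_diff V.span_add; (rule sp1_4 sp1_5 sp1_6 sp1_7 sp1_8 sp1_9 | (rule spE, simp add: E27_def)))
qed
lemma sp_23: "colMJ {2,3} \<in> V.span (colMJ ` E27)"
proof -
  have "colMJ {2,3} = (\<lambda>r f x. r * f x) (1/2) ((colMJ {1,4} + colMJ {1,5} + colMJ {1,6} + colMJ {1,7} + colMJ {1,8} + colMJ {1,9}) - (colMJ {2,4} + colMJ {2,5} + colMJ {2,6} + colMJ {2,7} + colMJ {2,8} + colMJ {2,9}) - (colMJ {3,4} + colMJ {3,5} + colMJ {3,6} + colMJ {3,7} + colMJ {3,8} + colMJ {3,9}))" (is "?l = ?r")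
  proof (rule ext)
    fix P show "?l P = ?r P" using rel1[of P] rel2[of P] rel3[of P] by (simp; linarith)
  qed
  then show ?thesis by (simp only:) (intro V.span_scale V.span_diff V.span_add; (rule sp1_4 sp1_5 sp1_6 sp1_7 sp1_8 sp1_9 | (rule spE, simp add: E27_def)))
qed
lemma PP0: "{{1,4,5},{2,3,6},{7,8,9}} \<in> parts333"
  unfolding parts333_def by (simp add: I9 card_insert_if ins_neq, auto)
lemma PP1: "{{1,3,6},{2,4,5},{7,8,9}} \<in> parts333"
  unfolding parts333_def by (simp add: I9 card_insert_if ins_neq, auto)
lemma PP2: "{{1,4,6},{2,3,5},{7,8,9}} \<in> parts333"
  unfolding parts333_def by (simp add: I9 card_insert_if ins_neq, auto)
lemma PP3: "{{1,3,5},{2,4,6},{7,8,9}} \<in> parts333"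
  unfolding parts333_def by (simp add: I9 card_insert_if ins_neq, auto)
lemma PP4: "{{1,5,6},{2,3,4},{7,8,9}} \<in> parts333"
  unfolding parts333_def by (simp add: I9 card_insert_if ins_neq, auto)
lemma PP5: "{{1,3,4},{2,5,6},{7,8,9}} \<in> parts333"
  unfolding parts333_def by (simp add: I9 card_insert_if ins_neq, auto)
lemma PP6: "{{1,4,7},{2,3,5},{6,8,9}} \<in> parts333"
  unfolding parts333_def by (simp add: I9 card_insert_if ins_neq, auto)
lemma PP7: "{{1,3,5},{2,4,7},{6,8,9}} \<in> parts333"
  unfolding parts333_def by (simp add: I9 card_insert_if ins_neq, auto)
lemma PP8: "{{1,5,7},{2,3,4},{6,8,9}} \<in> parts333"
  unfolding parts333_def by (simp add: I9 card_insert_if ins_neq, auto)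
lemma PP9: "{{1,3,4},{2,5,7},{6,8,9}} \<in> parts333"
  unfolding parts333_def by (simp add: I9 card_insert_if ins_neq, auto)
lemma PP10: "{{1,4,8},{2,3,5},{6,7,9}} \<in> parts333"
  unfolding parts333_def by (simp add: I9 card_insert_if ins_neq, auto)
lemma PP11: "{{1,3,5},{2,4,8},{6,7,9}} \<in> parts333"
  unfolding parts333_def by (simp add: I9 card_insert_if ins_neq, auto)
lemma PP12: "{{1,5,8},{2,3,4},{6,7,9}} \<in> parts333"
  unfolding parts333_def by (simp add: I9 card_insert_if ins_neq, auto)
lemma PP13: "{{1,3,4},{2,5,8},{6,7,9}} \<in> parts333"
  unfolding parts333_def by (simp add: I9 card_insert_if ins_neq, auto)
lemma PP14: "{{1,4,9},{2,3,5},{6,7,8}} \<in> parts333"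
  unfolding parts333_def by (simp add: I9 card_insert_if ins_neq, auto)
lemma PP15: "{{1,3,5},{2,4,9},{6,7,8}} \<in> parts333"
  unfolding parts333_def by (simp add: I9 card_insert_if ins_neq, auto)
lemma PP16: "{{1,5,9},{2,3,4},{6,7,8}} \<in> parts333"
  unfolding parts333_def by (simp add: I9 card_insert_if ins_neq, auto)
lemma PP17: "{{1,3,4},{2,5,9},{6,7,8}} \<in> parts333"
  unfolding parts333_def by (simp add: I9 card_insert_if ins_neq, auto)
lemma PP18: "{{1,2,6},{3,4,5},{7,8,9}} \<in> parts333"
  unfolding parts333_def by (simp add: I9 card_insert_if ins_neq, auto)
lemma PP19: "{{1,2,5},{3,4,6},{7,8,9}} \<in> parts333"
  unfolding parts333_def by (simp add: I9 card_insert_if ins_neq, auto)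
lemma PP20: "{{1,2,4},{3,5,6},{7,8,9}} \<in> parts333"
  unfolding parts333_def by (simp add: I9 card_insert_if ins_neq, auto)
lemma PP21: "{{1,2,5},{3,4,7},{6,8,9}} \<in> parts333"
  unfolding parts333_def by (simp add: I9 card_insert_if ins_neq, auto)
lemma PP22: "{{1,2,4},{3,5,7},{6,8,9}} \<in> parts333"
  unfolding parts333_def by (simp add: I9 card_insert_if ins_neq, auto)
lemma PP23: "{{1,2,5},{3,4,8},{6,7,9}} \<in> parts333"
  unfolding parts333_def by (simp add: I9 card_insert_if ins_neq, auto)
lemma PP24: "{{1,2,4},{3,5,8},{6,7,9}} \<in> parts333"
  unfolding parts333_def by (simp add: I9 card_insert_if ins_neq, auto)
lemma PP25: "{{1,2,5},{3,4,9},{6,7,8}} \<in> parts333"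
  unfolding parts333_def by (simp add: I9 card_insert_if ins_neq, auto)
lemma PP26: "{{1,2,4},{3,5,9},{6,7,8}} \<in> parts333"
  unfolding parts333_def by (simp add: I9 card_insert_if ins_neq, auto)
lemma PP27: "{{1,2,3},{4,5,6},{7,8,9}} \<in> parts333"
  unfolding parts333_def by (simp add: I9 card_insert_if ins_neq, auto)
lemma PP28: "{{1,3,7},{2,4,5},{6,8,9}} \<in> parts333"
  unfolding parts333_def by (simp add: I9 card_insert_if ins_neq, auto)
lemma PP29: "{{1,2,3},{4,5,7},{6,8,9}} \<in> parts333"
  unfolding parts333_def by (simp add: I9 card_insert_if ins_neq, auto)
lemma PP30: "{{1,3,8},{2,4,5},{6,7,9}} \<in> parts333"
  unfolding parts333_def by (simp add: I9 card_insert_if ins_neq, auto)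
lemma PP31: "{{1,2,3},{4,5,8},{6,7,9}} \<in> parts333"
  unfolding parts333_def by (simp add: I9 card_insert_if ins_neq, auto)
lemma PP32: "{{1,3,9},{2,4,5},{6,7,8}} \<in> parts333"
  unfolding parts333_def by (simp add: I9 card_insert_if ins_neq, auto)
lemma PP33: "{{1,2,3},{4,5,9},{6,7,8}} \<in> parts333"
  unfolding parts333_def by (simp add: I9 card_insert_if ins_neq, auto)
lemma PP34: "{{1,3,7},{2,4,6},{5,8,9}} \<in> parts333"
  unfolding parts333_def by (simp add: I9 card_insert_if ins_neq, auto)
lemma PP35: "{{1,2,4},{3,6,7},{5,8,9}} \<in> parts333"
  unfolding parts333_def by (simp add: I9 card_insert_if ins_neq, auto)
lemma PP36: "{{1,4,7},{2,3,6},{5,8,9}} \<in> parts333"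
  unfolding parts333_def by (simp add: I9 card_insert_if ins_neq, auto)
lemma PP37: "{{1,2,3},{4,6,7},{5,8,9}} \<in> parts333"
  unfolding parts333_def by (simp add: I9 card_insert_if ins_neq, auto)
lemma PP38: "{{1,3,8},{2,4,6},{5,7,9}} \<in> parts333"
  unfolding parts333_def by (simp add: I9 card_insert_if ins_neq, auto)
lemma PP39: "{{1,2,4},{3,6,8},{5,7,9}} \<in> parts333"
  unfolding parts333_def by (simp add: I9 card_insert_if ins_neq, auto)
lemma PP40: "{{1,4,8},{2,3,6},{5,7,9}} \<in> parts333"
  unfolding parts333_def by (simp add: I9 card_insert_if ins_neq, auto)
lemma PP41: "{{1,2,3},{4,6,8},{5,7,9}} \<in> parts333"
  unfolding parts333_def by (simp add: I9 card_insert_if ins_neq, auto)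
lemma PP42: "{{1,3,9},{2,4,6},{5,7,8}} \<in> parts333"
  unfolding parts333_def by (simp add: I9 card_insert_if ins_neq, auto)
lemma PP43: "{{1,2,4},{3,6,9},{5,7,8}} \<in> parts333"
  unfolding parts333_def by (simp add: I9 card_insert_if ins_neq, auto)
lemma PP44: "{{1,4,9},{2,3,6},{5,7,8}} \<in> parts333"
  unfolding parts333_def by (simp add: I9 card_insert_if ins_neq, auto)
lemma PP45: "{{1,2,3},{4,6,9},{5,7,8}} \<in> parts333"
  unfolding parts333_def by (simp add: I9 card_insert_if ins_neq, auto)
lemma PP46: "{{1,3,8},{2,4,7},{5,6,9}} \<in> parts333"
  unfolding parts333_def by (simp add: I9 card_insert_if ins_neq, auto)
lemma PP47: "{{1,2,4},{3,7,8},{5,6,9}} \<in> parts333"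
  unfolding parts333_def by (simp add: I9 card_insert_if ins_neq, auto)
lemma PP48: "{{1,4,8},{2,3,7},{5,6,9}} \<in> parts333"
  unfolding parts333_def by (simp add: I9 card_insert_if ins_neq, auto)
lemma PP49: "{{1,2,3},{4,7,8},{5,6,9}} \<in> parts333"
  unfolding parts333_def by (simp add: I9 card_insert_if ins_neq, auto)
lemma PP50: "{{1,3,9},{2,4,7},{5,6,8}} \<in> parts333"
  unfolding parts333_def by (simp add: I9 card_insert_if ins_neq, auto)
lemma PP51: "{{1,2,4},{3,7,9},{5,6,8}} \<in> parts333"
  unfolding parts333_def by (simp add: I9 card_insert_if ins_neq, auto)
lemma PP52: "{{1,4,9},{2,3,7},{5,6,8}} \<in> parts333"
  unfolding parts333_def by (simp add: I9 card_insert_if ins_neq, auto)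
lemma PP53: "{{1,2,3},{4,7,9},{5,6,8}} \<in> parts333"
  unfolding parts333_def by (simp add: I9 card_insert_if ins_neq, auto)
lemma PP54: "{{1,3,9},{2,4,8},{5,6,7}} \<in> parts333"
  unfolding parts333_def by (simp add: I9 card_insert_if ins_neq, auto)
lemma PP55: "{{1,2,4},{3,8,9},{5,6,7}} \<in> parts333"
  unfolding parts333_def by (simp add: I9 card_insert_if ins_neq, auto)
lemma PP56: "{{1,4,9},{2,3,8},{5,6,7}} \<in> parts333"
  unfolding parts333_def by (simp add: I9 card_insert_if ins_neq, auto)
lemma PP57: "{{1,2,3},{4,8,9},{5,6,7}} \<in> parts333"
  unfolding parts333_def by (simp add: I9 card_insert_if ins_neq, auto)
lemma indep_core:
  fixes x :: "nat set \<Rightarrow> real"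
  assumes h: "\<And>P. P \<in> parts333 \<Longrightarrow> (\<Sum>e\<in>E27. x e * Mentry P e) - X/4 = 0"
  shows "\<forall>e\<in>E27. x e = 0"
proof -
  note [simp] = doubleton_eq_iff
  note q0 = h[OF PP0, unfolded E27_def Mentry_def, simplified]
  note q1 = h[OF PP1, unfolded E27_def Mentry_def, simplified]
  note q2 = h[OF PP2, unfolded E27_def Mentry_def, simplified]
  note q3 = h[OF PP3, unfolded E27_def Mentry_def, simplified]
  note q4 = h[OF PP4, unfolded E27_def Mentry_def, simplified]
  note q5 = h[OF PP5, unfolded E27_def Mentry_def, simplified]
  note q6 = h[OF PP6, unfolded E27_def Mentry_def, simplified]
  note q7 = h[OF PP7, unfolded E27_def Mentry_def, simplified]
  note q8 = h[OF PP8, unfolded E27_def Mentry_def, simplified]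
  note q9 = h[OF PP9, unfolded E27_def Mentry_def, simplified]
  note q10 = h[OF PP10, unfolded E27_def Mentry_def, simplified]
  note q11 = h[OF PP11, unfolded E27_def Mentry_def, simplified]
  note q12 = h[OF PP12, unfolded E27_def Mentry_def, simplified]
  note q13 = h[OF PP13, unfolded E27_def Mentry_def, simplified]
  note q14 = h[OF PP14, unfolded E27_def Mentry_def, simplified]
  note q15 = h[OF PP15, unfolded E27_def Mentry_def, simplified]
  note q16 = h[OF PP16, unfolded E27_def Mentry_def, simplified]
  note q17 = h[OF PP17, unfolded E27_def Mentry_def, simplified]
  note q18 = h[OF PP18, unfolded E27_def Mentry_def, simplified]
  note q19 = h[OF PP19, unfolded E27_def Mentry_def, simplified]
  note q20 = h[OF PP20, unfolded E27_def Mentry_def, simplified]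
  note q21 = h[OF PP21, unfolded E27_def Mentry_def, simplified]
  note q22 = h[OF PP22, unfolded E27_def Mentry_def, simplified]
  note q23 = h[OF PP23, unfolded E27_def Mentry_def, simplified]
  note q24 = h[OF PP24, unfolded E27_def Mentry_def, simplified]
  note q25 = h[OF PP25, unfolded E27_def Mentry_def, simplified]
  note q26 = h[OF PP26, unfolded E27_def Mentry_def, simplified]
  note q27 = h[OF PP27, unfolded E27_def Mentry_def, simplified]
  note q28 = h[OF PP28, unfolded E27_def Mentry_def, simplified]
  note q29 = h[OF PP29, unfolded E27_def Mentry_def, simplified]
  note q30 = h[OF PP30, unfolded E27_def Mentry_def, simplified]
  note q31 = h[OF PP31, unfolded E27_def Mentry_def, simplified]
  note q32 = h[OF PP32, unfolded E27_def Mentry_def, simplified]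
  note q33 = h[OF PP33, unfolded E27_def Mentry_def, simplified]
  note q34 = h[OF PP34, unfolded E27_def Mentry_def, simplified]
  note q35 = h[OF PP35, unfolded E27_def Mentry_def, simplified]
  note q36 = h[OF PP36, unfolded E27_def Mentry_def, simplified]
  note q37 = h[OF PP37, unfolded E27_def Mentry_def, simplified]
  note q38 = h[OF PP38, unfolded E27_def Mentry_def, simplified]
  note q39 = h[OF PP39, unfolded E27_def Mentry_def, simplified]
  note q40 = h[OF PP40, unfolded E27_def Mentry_def, simplified]
  note q41 = h[OF PP41, unfolded E27_def Mentry_def, simplified]
  note q42 = h[OF PP42, unfolded E27_def Mentry_def, simplified]
  note q43 = h[OF PP43, unfolded E27_def Mentry_def, simplified]
  note q44 = h[OF PP44, unfolded E27_def Mentry_def, simplified]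
  note q45 = h[OF PP45, unfolded E27_def Mentry_def, simplified]
  note q46 = h[OF PP46, unfolded E27_def Mentry_def, simplified]
  note q47 = h[OF PP47, unfolded E27_def Mentry_def, simplified]
  note q48 = h[OF PP48, unfolded E27_def Mentry_def, simplified]
  note q49 = h[OF PP49, unfolded E27_def Mentry_def, simplified]
  note q50 = h[OF PP50, unfolded E27_def Mentry_def, simplified]
  note q51 = h[OF PP51, unfolded E27_def Mentry_def, simplified]
  note q52 = h[OF PP52, unfolded E27_def Mentry_def, simplified]
  note q53 = h[OF PP53, unfolded E27_def Mentry_def, simplified]
  note q54 = h[OF PP54, unfolded E27_def Mentry_def, simplified]
  note q55 = h[OF PP55, unfolded E27_def Mentry_def, simplified]
  note q56 = h[OF PP56, unfolded E27_def Mentry_def, simplified]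
  note q57 = h[OF PP57, unfolded E27_def Mentry_def, simplified]
  have z2_4: "x {2,4} = 0" using q0 q1 q2 q3  by linarith
  have z2_5: "x {2,5} = 0" using q0 q1 q4 q5  by linarith
  have z2_6: "x {2,6} = 0" using q2 q3 q4 q5  by linarith
  have z2_7: "x {2,7} = 0" using q6 q7 q8 q9  by linarith
  have z2_8: "x {2,8} = 0" using q10 q11 q12 q13  by linarith
  have z2_9: "x {2,9} = 0" using q14 q15 q16 q17  by linarith
  have z3_4: "x {3,4} = 0" using q0 q18 q2 q19  by linarith
  have z3_5: "x {3,5} = 0" using q0 q18 q4 q20  by linarith
  have z3_6: "x {3,6} = 0" using q2 q19 q4 q20  by linarith
  have z3_7: "x {3,7} = 0" using q6 q21 q8 q22  by linarith
  have z3_8: "x {3,8} = 0" using q10 q23 q12 q24  by linarith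
  have z3_9: "x {3,9} = 0" using q14 q25 q16 q26  by linarith
  have zb_4_5: "x {4,5} = 0" using q3 q18 q4 q27 z2_4 by linarith
  have zb_4_6: "x {4,6} = 0" using q1 q19 q4 q27 z2_4 by linarith
  have zb_4_7: "x {4,7} = 0" using q28 q21 q8 q29 z2_4 by linarith
  have zb_4_8: "x {4,8} = 0" using q30 q23 q12 q31 z2_4 by linarith
  have zb_4_9: "x {4,9} = 0" using q32 q25 q16 q33 z2_4 by linarith
  have zb_5_6: "x {5,6} = 0" using q1 q20 q2 q27 z2_5 by linarith
  have zb_5_7: "x {5,7} = 0" using q28 q22 q6 q29 z2_5 by linarith
  have zb_5_8: "x {5,8} = 0" using q30 q24 q10 q31 z2_5 by linarith
  have zb_5_9: "x {5,9} = 0" using q32 q26 q14 q33 z2_5 by linarith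
  have zb_6_7: "x {6,7} = 0" using q34 q35 q36 q37 z2_6 by linarith
  have zb_6_8: "x {6,8} = 0" using q38 q39 q40 q41 z2_6 by linarith
  have zb_6_9: "x {6,9} = 0" using q42 q43 q44 q45 z2_6 by linarith
  have zb_7_8: "x {7,8} = 0" using q46 q47 q48 q49 z2_7 by linarith
  have zb_7_9: "x {7,9} = 0" using q50 q51 q52 q53 z2_7 by linarith
  have zb_8_9: "x {8,9} = 0" using q54 q55 q56 q57 z2_8 by linarith
  show ?thesis unfolding E27_def by (simp only: ball_simps) (intro conjI TrueI; fact)
qed

lemma indexed:
  fixes x :: "nat set \<Rightarrow> real"
  assumes h: "(\<Sum>e\<in>E27. (\<lambda>r f x. r * f x) (x e) (colMJ e)) = 0"
  shows "\<forall>e\<in>E27. x e = 0"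
proof (rule indep_core[where X = "\<Sum>e\<in>E27. x e"])
  fix P assume P: "P \<in> parts333"
  have "0 = (\<Sum>e\<in>E27. (\<lambda>r f x. r * f x) (x e) (colMJ e)) P" using h by simp
  also have "\<dots> = (\<Sum>e\<in>E27. x e * (Mentry P e - 1/4))" by (simp add: sum_apply colMJ_def P)
  also have "\<dots> = (\<Sum>e\<in>E27. x e * Mentry P e) - (\<Sum>e\<in>E27. x e)/4"
    by (simp add: algebra_simps sum_subtractf sum_divide_distrib)
  finally show "(\<Sum>e\<in>E27. x e * Mentry P e) - (\<Sum>e\<in>E27. x e)/4 = 0" by simp
qed

lemma finE27: "finite E27" by (simp add: E27_def)

lemma inj27: "inj_on colMJ E27"
proof (rule inj_onI, rule ccontr)
  fix a b assume ab: "a \<in> E27" "b \<in> E27" "colMJ a = colMJ b" "a \<noteq> b"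
  define y where "y = (\<lambda>e. if e = a then 1 else if e = b then -1 else (0::real))"
  have "(\<Sum>e\<in>E27. (\<lambda>r f x. r * f x) (y e) (colMJ e)) = (\<Sum>e\<in>{a,b}. (\<lambda>r f x. r * f x) (y e) (colMJ e))"
    by (rule sum.mono_neutral_right) (use ab finE27 in \<open>auto simp: y_def fun_eq_iff\<close>)
  also have "\<dots> = 0" using ab by (simp add: y_def fun_eq_iff)
  finally have "\<forall>e\<in>E27. y e = 0" by (rule indexed)
  then have "y a = 0" using ab(1) by blast
  then show False by (simp add: y_def)
qed

lemma key27:
  assumes s: "(\<Sum>v\<in>colMJ ` E27. (\<lambda>r f x. r * f x) (g v) v) = 0" and v: "v \<in> colMJ ` E27"
  shows "g v = 0"
proof -
  obtain e where e: "e \<in> E27" "v = colMJ e" using v by blast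
  have "(\<Sum>e\<in>E27. (\<lambda>r f x. r * f x) (g (colMJ e)) (colMJ e)) = 0"
    using s unfolding sum.reindex[OF inj27] by (simp add: comp_def)
  then have "\<forall>e\<in>E27. g (colMJ e) = 0" by (rule indexed)
  then show ?thesis using e by simp
qed

lemma dim27: "vector_space.dim (\<lambda>(r::real) (f::nat set set \<Rightarrow> real) x. r * f x) (colMJ ` pairs9) = 27"
proof (rule V.dim_unique[where B = "colMJ ` E27"])
  show "colMJ ` E27 \<subseteq> colMJ ` pairs9"
    by (rule image_mono) (simp add: pairs9_eq E27_def)
  show "colMJ ` pairs9 \<subseteq> V.span (colMJ ` E27)"
    unfolding pairs9_eq image_insert image_empty insert_subset
    by (intro conjI empty_subsetI; (rule sp_12 sp_13 sp_23 sp1_4 sp1_5 sp1_6 sp1_7 sp1_8 sp1_9 | (rule spE, simp add: E27_def)))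
  show "V.independent (colMJ ` E27)"
    by (rule V.independent_if_scalars_zero) (use finE27 key27 in auto)
  show "card (colMJ ` E27) = 27"
    using card_image[OF inj27] by (simp add: E27_def doubleton_eq_iff)
qed




definition G :: "(nat \<times> nat) set" where
  "G = {(0,0),(0,1),(0,2),(1,0),(1,1),(1,2),(2,0),(2,1),(2,2)}"
definition R0 :: "(nat \<times> nat) set set" where
  "R0 = {{(0,0),(0,1),(0,2)},{(1,0),(1,1),(1,2)},{(2,0),(2,1),(2,2)}}"
definition Perms :: "(nat \<times> nat \<times> nat) set" where
  "Perms = {(0,1,2),(0,2,1),(1,0,2),(1,2,0),(2,0,1),(2,1,0)}"
definition gQ :: "nat \<Rightarrow> nat \<Rightarrow> nat \<Rightarrow> nat \<Rightarrow> nat \<Rightarrow> nat \<Rightarrow> (nat \<times> nat) set set" where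
  "gQ a b c d e f = {{(0,0),(1,a),(2,d)},{(0,1),(1,b),(2,e)},{(0,2),(1,c),(2,f)}}"
definition gpart :: "(nat \<times> nat) set set \<Rightarrow> bool" where
  "gpart R \<longleftrightarrow> \<Union>R = G \<and> card R = 3 \<and> (\<forall>c\<in>R. card c = 3) \<and> (\<forall>c\<in>R. \<forall>d\<in>R. c \<noteq> d \<longrightarrow> c \<inter> d = {})"
definition gM :: "(nat \<times> nat) set set \<Rightarrow> nat \<times> nat \<Rightarrow> nat \<times> nat \<Rightarrow> real" where
  "gM R p q = (if \<exists>c\<in>R. {p,q} \<subseteq> c then 1 else 0)"

lemma gQ_good:
  assumes "(a,b,c) \<in> Perms" "(d,e,f) \<in> Perms"
  shows "gQ a b c d e f \<subseteq> Pow G \<and> gpart (gQ a b c d e f) \<and> (\<forall>x\<in>R0. \<forall>y\<in>gQ a b c d e f. card (x \<inter> y) = 1)"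
  using assms unfolding Perms_def
  by (simp only: insert_iff empty_iff prod.inject) (elim disjE conjE; simp add: gQ_def gpart_def G_def R0_def card_insert_if ins_neq; auto)

definition PL :: "(nat \<times> nat \<times> nat) list" where
  "PL = [(0,1,2),(0,2,1),(1,0,2),(1,2,0),(2,0,1),(2,1,0)]"

lemma sumPP: "(\<Sum>x\<in>Perms \<times> Perms. g x) = sum_list (map g (List.product PL PL))"
proof -
  have "Perms \<times> Perms = set (List.product PL PL)" by (simp add: Perms_def PL_def)
  moreover have "distinct (List.product PL PL)" by (simp add: PL_def)
  ultimately show ?thesis by (simp add: sum_list_distinct_conv_sum_set)
qed

definition QQ :: "(nat \<times> nat \<times> nat) \<times> (nat \<times> nat \<times> nat) \<Rightarrow> (nat \<times> nat) set set" where
  "QQ x = (case x of ((a,b,c),(d,e,f)) \<Rightarrow> gQ a b c d e f)"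

lemma concrete:
  assumes "p \<in> G" "q \<in> G" "p \<noteq> q"
  shows "(\<Sum>x\<in>Perms \<times> Perms. gM (QQ x) p q - 1/4) = -12 * (gM R0 p q - 1/4)"
  using assms unfolding G_def sumPP
  by (simp only: insert_iff empty_iff) (elim disjE; simp add: PL_def QQ_def gQ_def gM_def R0_def)


lemma trip_eq: "{(0::nat,i::nat),(Suc 0,j),(2,k)} = {(0,i'),(Suc 0,j'),(2,k')} \<longleftrightarrow> i=i' \<and> j=j' \<and> k=k'"
proof
  assume h: "{(0::nat,i::nat),(Suc 0,j),(2,k)} = {(0,i'),(Suc 0,j'),(2,k')}"
  have "(0,i) \<in> {(0::nat,i'),(Suc 0,j'),(2::nat,k')}" unfolding h[symmetric] by simp
  then have "i = i'" by simp
  moreover have "(Suc 0,j) \<in> {(0::nat,i'),(Suc 0,j'),(2::nat,k')}" unfolding h[symmetric] by simp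
  then have "j = j'" by simp
  moreover have "(2,k) \<in> {(0::nat,i'),(Suc 0,j'),(2::nat,k')}" unfolding h[symmetric] by simp
  then have "k = k'" by simp
  ultimately show "i=i' \<and> j=j' \<and> k=k'" by simp
qed simp

lemma QQ_inj: "inj_on QQ (Perms \<times> Perms)"
proof (rule inj_onI)
  fix x y assume x: "x \<in> Perms \<times> Perms" and y: "y \<in> Perms \<times> Perms" and eq: "QQ x = QQ y"
  obtain a b c d e f where xx: "x = ((a,b,c),(d,e,f))" by (cases x) auto
  obtain a' b' c' d' e' f' where yy: "y = ((a',b',c'),(d',e',f'))" by (cases y) auto
  have eq': "gQ a b c d e f = gQ a' b' c' d' e' f'" using eq by (simp add: QQ_def xx yy)
  have 1: "{(0::nat,0::nat),(1,a),(2,d)} \<in> gQ a' b' c' d' e' f'" unfolding eq'[symmetric] by (simp add: gQ_def)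
  have 2: "{(0::nat,1::nat),(1,b),(2,e)} \<in> gQ a' b' c' d' e' f'" unfolding eq'[symmetric] by (simp add: gQ_def)
  have 3: "{(0::nat,2::nat),(1,c),(2,f)} \<in> gQ a' b' c' d' e' f'" unfolding eq'[symmetric] by (simp add: gQ_def)
  from 1 2 3 show "x = y" unfolding xx yy gQ_def by (simp add: trip_eq)
qed

lemma part_iff:
  assumes L: "inj_on L G" "L ` G = {1..9}" and R: "R \<subseteq> Pow G"
  shows "(image L ` R \<in> parts333) \<longleftrightarrow> gpart R"
proof -
  have sub: "\<And>c. c \<in> R \<Longrightarrow> c \<subseteq> G" using R by auto
  have cardc: "\<And>c. c \<in> R \<Longrightarrow> card (L ` c) = card c"
    using sub L(1) by (meson card_image inj_on_subset)
  have eqc: "\<And>c d. c\<in>R \<Longrightarrow> d\<in>R \<Longrightarrow> (L`c = L`d) \<longleftrightarrow> c = d"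
    by (meson inj_on_image_eq_iff[OF L(1)] sub)
  have intc: "\<And>c d. c\<in>R \<Longrightarrow> d\<in>R \<Longrightarrow> L`c \<inter> L`d = L`(c\<inter>d)"
    by (metis inj_on_image_Int[OF L(1)] sub)
  have U: "\<Union>(image L ` R) = L ` \<Union>R" by auto
  have UR: "\<Union>R \<subseteq> G" using R by auto
  have UG: "L ` \<Union>R = {1..9} \<longleftrightarrow> \<Union>R = G"
    by (metis L(2) inj_on_image_eq_iff[OF L(1)] subset_refl UR)
  have cardR: "card (image L ` R) = card R"
    by (rule card_image, rule inj_on_subset[OF inj_on_image_Pow[OF L(1)] R])
  have A: "(\<forall>c\<in>image L ` R. card c = 3) \<longleftrightarrow> (\<forall>c\<in>R. card c = 3)" using cardc by auto
  have B: "(\<forall>c\<in>image L ` R. \<forall>d\<in>image L ` R. c \<noteq> d \<longrightarrow> c \<inter> d = {}) \<longleftrightarrow>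
      (\<forall>c\<in>R. \<forall>d\<in>R. c \<noteq> d \<longrightarrow> c \<inter> d = {})" using eqc intc by auto
  show ?thesis unfolding parts333_def gpart_def mem_Collect_eq U UG cardR A B by (rule refl)
qed

lemma adj_iff:
  assumes L: "inj_on L G" and R1: "R1 \<subseteq> Pow G" and R2: "R2 \<subseteq> Pow G"
  shows "adj333 (image L ` R1) (image L ` R2) \<longleftrightarrow> (\<forall>c\<in>R1. \<forall>d\<in>R2. card (c \<inter> d) = 1)"
proof -
  have "\<And>c d. c\<in>R1 \<Longrightarrow> d\<in>R2 \<Longrightarrow> card (L`c \<inter> L`d) = card (c \<inter> d)"
  proof -
    fix c d assume "c\<in>R1" "d\<in>R2"
    then have "c \<subseteq> G" "d \<subseteq> G" using R1 R2 by auto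
    then have "L`c \<inter> L`d = L`(c \<inter> d)" using inj_on_image_Int[OF L] by metis
    moreover have "inj_on L (c \<inter> d)" using inj_on_subset[OF L] \<open>c \<subseteq> G\<close> by blast
    ultimately show "card (L`c \<inter> L`d) = card (c \<inter> d)" by (simp add: card_image)
  qed
  then show ?thesis unfolding adj333_def by auto
qed

lemma Mentry_tr:
  assumes L: "inj_on L G" and R: "R \<subseteq> Pow G" and pq: "p \<in> G" "q \<in> G"
  shows "Mentry (image L ` R) (L ` {p,q}) = gM R p q"
proof -
  have "(\<exists>c'\<in>image L ` R. L ` {p,q} \<subseteq> c') \<longleftrightarrow> (\<exists>c\<in>R. {p,q} \<subseteq> c)"
  proof -
    have "L ` {p,q} \<subseteq> L ` c \<longleftrightarrow> {p,q} \<subseteq> c" if c: "c \<in> R" for c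
    proof -
      have cG: "c \<subseteq> G" using R c by auto
      show ?thesis using inj_on_image_mem_iff[OF L pq(1) cG] inj_on_image_mem_iff[OF L pq(2) cG] by simp
    qed
    then show ?thesis by auto
  qed
  then show ?thesis unfolding Mentry_def gM_def by simp
qed


lemma lt3: "a < (3::nat) \<longleftrightarrow> a = 0 \<or> a = 1 \<or> a = 2" by auto

lemma perm3: "a < 3 \<Longrightarrow> b < 3 \<Longrightarrow> c < 3 \<Longrightarrow> a \<noteq> b \<Longrightarrow> a \<noteq> c \<Longrightarrow> b \<noteq> c \<Longrightarrow> (a,b,c) \<in> Perms"
  unfolding lt3 Perms_def by auto

lemma grid_char:
  assumes RG: "R \<subseteq> Pow G" and gp: "gpart R" and ga: "\<forall>x\<in>R0. \<forall>y\<in>R. card (x \<inter> y) = 1"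
  shows "\<exists>x\<in>Perms \<times> Perms. R = QQ x"
proof -
  have U: "\<Union>R = G" and dj: "\<And>c d. c\<in>R \<Longrightarrow> d\<in>R \<Longrightarrow> c\<noteq>d \<Longrightarrow> c\<inter>d={}"
    using gp unfolding gpart_def by auto
  define Rw :: "nat \<Rightarrow> (nat\<times>nat) set" where "Rw r = {(r,0),(r,1),(r,2)}" for r
  have R0': "R0 = {Rw 0, Rw 1, Rw 2}" by (simp add: R0_def Rw_def)
  have GR: "G = Rw 0 \<union> Rw 1 \<union> Rw 2" by (auto simp: G_def Rw_def)
  have one: "\<exists>k<3. Rw r \<inter> y = {(r,k)}" if y: "y \<in> R" and r: "r < 3" for y r
  proof -
    have "Rw r \<in> R0" using r unfolding lt3 R0' by auto
    then have "card (Rw r \<inter> y) = 1" using ga y by blast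
    then obtain z where z: "Rw r \<inter> y = {z}" by (auto simp: card_1_singleton_iff)
    then have "z \<in> Rw r" by blast
    then obtain k where "k<3" "z = (r,k)" by (auto simp: Rw_def)
    then show ?thesis using z by blast
  qed
  have form: "\<exists>i j k. i<3 \<and> j<3 \<and> k<3 \<and> y = {(0,i),(1,j),(2,k)}" if y: "y \<in> R" for y
  proof -
    obtain i where i: "i<3" "Rw 0 \<inter> y = {(0,i)}" using one[OF y, of 0] by auto
    obtain j where j: "j<3" "Rw 1 \<inter> y = {(1,j)}" using one[OF y, of 1] by auto
    obtain k where k: "k<3" "Rw 2 \<inter> y = {(2,k)}" using one[OF y, of 2] by auto
    have "y = y \<inter> G" using y RG by auto
    also have "\<dots> = (Rw 0 \<inter> y) \<union> (Rw 1 \<inter> y) \<union> (Rw 2 \<inter> y)" unfolding GR by blast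
    also have "\<dots> = {(0,i),(1,j),(2,k)}" using i j k by auto
    finally show ?thesis using i j k by blast
  qed
  have cell: "\<exists>j k. j<3 \<and> k<3 \<and> {(0,i),(1,j),(2,k)} \<in> R" if i: "i<3" for i
  proof -
    have "(0,i) \<in> G" using i unfolding lt3 G_def by auto
    then obtain y where y: "y\<in>R" "(0,i)\<in>y" using U by blast
    then obtain i' j k where ijk: "i'<3" "j<3" "k<3" "y = {(0,i'),(1,j),(2,k)}" using form by blast
    then have "i' = i" using y(2) by auto
    then show ?thesis using ijk y by blast
  qed
  obtain j0 k0 where c0: "j0<3" "k0<3" "{(0,0),(1,j0),(2,k0)} \<in> R" using cell[of 0] by auto
  obtain j1 k1 where c1: "j1<3" "k1<3" "{(0,1),(1,j1),(2,k1)} \<in> R" using cell[of 1] by auto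
  obtain j2 k2 where c2: "j2<3" "k2<3" "{(0,2),(1,j2),(2,k2)} \<in> R" using cell[of 2] by auto
  have Req: "R = {{(0,0),(1,j0),(2,k0)},{(0,1),(1,j1),(2,k1)},{(0,2),(1,j2),(2,k2)}}"
  proof
    show "R \<subseteq> {{(0,0),(1,j0),(2,k0)},{(0,1),(1,j1),(2,k1)},{(0,2),(1,j2),(2,k2)}}"
    proof
      fix y assume y: "y \<in> R"
      then obtain i j k where ijk: "i<3" "j<3" "k<3" "y = {(0,i),(1,j),(2,k)}" using form by blast
      have "i = 0 \<or> i = 1 \<or> i = 2" using ijk(1) by auto
      then show "y \<in> {{(0,0),(1,j0),(2,k0)},{(0,1),(1,j1),(2,k1)},{(0,2),(1,j2),(2,k2)}}"
      proof (elim disjE)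
        assume "i = 0"
        then have "(0,0) \<in> y \<inter> {(0,0),(1,j0),(2,k0)}" using ijk by auto
        then have "y = {(0,0),(1,j0),(2,k0)}" using dj[OF y c0(3)] by (metis empty_iff)
        then show ?thesis by simp
      next
        assume "i = 1"
        then have "(0,1) \<in> y \<inter> {(0,1),(1,j1),(2,k1)}" using ijk by auto
        then have "y = {(0,1),(1,j1),(2,k1)}" using dj[OF y c1(3)] by (metis empty_iff)
        then show ?thesis by simp
      next
        assume "i = 2"
        then have "(0,2) \<in> y \<inter> {(0,2),(1,j2),(2,k2)}" using ijk by auto
        then have "y = {(0,2),(1,j2),(2,k2)}" using dj[OF y c2(3)] by (metis empty_iff)
        then show ?thesis by simp
      qed
    qed
    show "{{(0,0),(1,j0),(2,k0)},{(0,1),(1,j1),(2,k1)},{(0,2),(1,j2),(2,k2)}} \<subseteq> R"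
      using c0 c1 c2 by simp
  qed
  have n01: "{(0::nat,0::nat),(1,j0),(2,k0)} \<noteq> {(0,1),(1,j1),(2,k1)}"
  proof
    assume h: "{(0::nat,0::nat),(1,j0),(2,k0)} = {(0,1),(1,j1),(2,k1)}"
    have "(0::nat,0::nat) \<in> {(0::nat,1::nat),(1,j1),(2,k1)}" unfolding h[symmetric] by simp
    then show False by simp
  qed
  have n02: "{(0::nat,0::nat),(1,j0),(2,k0)} \<noteq> {(0,2),(1,j2),(2,k2)}"
  proof
    assume h: "{(0::nat,0::nat),(1,j0),(2,k0)} = {(0,2),(1,j2),(2,k2)}"
    have "(0::nat,0::nat) \<in> {(0::nat,2::nat),(1,j2),(2,k2)}" unfolding h[symmetric] by simp
    then show False by simp
  qed
  have n12: "{(0::nat,1::nat),(1,j1),(2,k1)} \<noteq> {(0,2),(1,j2),(2,k2)}"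
  proof
    assume h: "{(0::nat,1::nat),(1,j1),(2,k1)} = {(0,2),(1,j2),(2,k2)}"
    have "(0::nat,1::nat) \<in> {(0::nat,2::nat),(1,j2),(2,k2)}" unfolding h[symmetric] by simp
    then show False by simp
  qed
  have d01: "{(0::nat,0::nat),(1,j0),(2,k0)} \<inter> {(0,1),(1,j1),(2,k1)} = {}" by (rule dj[OF c0(3) c1(3) n01])
  have d02: "{(0::nat,0::nat),(1,j0),(2,k0)} \<inter> {(0,2),(1,j2),(2,k2)} = {}" by (rule dj[OF c0(3) c2(3) n02])
  have d12: "{(0::nat,1::nat),(1,j1),(2,k1)} \<inter> {(0,2),(1,j2),(2,k2)} = {}" by (rule dj[OF c1(3) c2(3) n12])
  have "j0 \<noteq> j1" "k0 \<noteq> k1" using d01 by auto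
  moreover have "j0 \<noteq> j2" "k0 \<noteq> k2" using d02 by auto
  moreover have "j1 \<noteq> j2" "k1 \<noteq> k2" using d12 by auto
  ultimately have "(j0,j1,j2) \<in> Perms" "(k0,k1,k2) \<in> Perms"
    using perm3[OF c0(1) c1(1) c2(1)] perm3[OF c0(2) c1(2) c2(2)] by auto
  moreover have "R = QQ ((j0,j1,j2),(k0,k1,k2))" unfolding Req QQ_def gQ_def by simp
  ultimately show ?thesis by blast
qed


lemma obtainL:
  assumes P: "P \<in> parts333"
  shows "\<exists>L. inj_on L G \<and> L ` G = {1..9} \<and> P = image L ` R0"
proof -
  have U: "\<Union>P = {1..9}" and cP: "card P = 3" and c3: "\<And>c. c\<in>P \<Longrightarrow> card c = 3"
    and dj: "\<And>c d. c\<in>P \<Longrightarrow> d\<in>P \<Longrightarrow> c\<noteq>d \<Longrightarrow> c\<inter>d={}"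
    using P unfolding parts333_def by auto
  obtain A B C where ABC: "P = {A,B,C}" "A \<noteq> B" "B \<noteq> C" "A \<noteq> C" using cP card_3_iff by metis
  have AB: "A \<inter> B = {}" and AC: "A \<inter> C = {}" and BC: "B \<inter> C = {}" using dj ABC by auto
  obtain a0 a1 a2 where A: "A = {a0,a1,a2}" "a0 \<noteq> a1" "a1 \<noteq> a2" "a0 \<noteq> a2"
    using c3[of A] ABC card_3_iff by (metis insertI1)
  obtain b0 b1 b2 where B: "B = {b0,b1,b2}" "b0 \<noteq> b1" "b1 \<noteq> b2" "b0 \<noteq> b2"
    using c3[of B] ABC card_3_iff by (metis insertI1 insertI2)
  obtain c0 c1 c2 where C: "C = {c0,c1,c2}" "c0 \<noteq> c1" "c1 \<noteq> c2" "c0 \<noteq> c2"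
    using c3[of C] ABC card_3_iff by (metis insertI1 insertI2)
  define L where "L = (\<lambda>(r::nat,k::nat). if r = 0 then (if k = 0 then a0 else if k = 1 then a1 else a2)
     else if r = 1 then (if k = 0 then b0 else if k = 1 then b1 else b2)
     else (if k = 0 then c0 else if k = 1 then c1 else c2))"
  have img: "L ` G = A \<union> B \<union> C" unfolding G_def L_def A B C by auto
  have "card (A \<union> B \<union> C) = 9"
  proof -
    have cA: "card A = 3" and cB: "card B = 3" and cC: "card C = 3" using c3 ABC by auto
    then have fA: "finite A" and fB: "finite B" and fC: "finite C" by (auto intro: card_ge_0_finite)
    have "card (A \<union> B) = 6" using card_Un_disjoint[OF fA fB AB] cA cB by simp
    moreover have "(A \<union> B) \<inter> C = {}" using AC BC by blast
    ultimately show ?thesis using card_Un_disjoint[of "A \<union> B" C] fA fB fC cC by simp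
  qed
  moreover have "card G = 9" by (simp add: G_def)
  ultimately have inj: "inj_on L G" using img by (intro eq_card_imp_inj_on) (auto simp: G_def)
  have "L ` G = {1..9}" using img U ABC by (simp add: Un_assoc)
  moreover have "P = image L ` R0" unfolding R0_def L_def ABC A B C by simp
  ultimately show ?thesis using inj by blast
qed

lemma obtain_pq:
  assumes e: "e \<in> pairs9" and L: "L ` G = {1..9}"
  shows "\<exists>p q. p \<in> G \<and> q \<in> G \<and> p \<noteq> q \<and> e = L ` {p,q}"
proof -
  obtain x y where xy: "e = {x,y}" "x \<noteq> y" "e \<subseteq> {1..9}" using e unfolding pairs9_def by (auto simp: card_2_iff)
  then have "x \<in> L ` G" "y \<in> L ` G" using L by auto
  then obtain p q where "p \<in> G" "q \<in> G" "x = L p" "y = L q" by blast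
  then show ?thesis using xy by (intro exI[of _ p] exI[of _ q]) auto
qed

lemma nbr:
  assumes L: "inj_on L G" "L ` G = {1..9}"
  shows "{Q\<in>parts333. adj333 (image L ` R0) Q} = (\<lambda>x. image L ` QQ x) ` (Perms \<times> Perms)"
proof
  have R0G: "R0 \<subseteq> Pow G" by (auto simp: R0_def G_def)
  show "(\<lambda>x. image L ` QQ x) ` (Perms \<times> Perms) \<subseteq> {Q\<in>parts333. adj333 (image L ` R0) Q}"
  proof
    fix Q assume "Q \<in> (\<lambda>x. image L ` QQ x) ` (Perms \<times> Perms)"
    then obtain a b c d e f where x: "(a,b,c) \<in> Perms" "(d,e,f) \<in> Perms" "Q = image L ` gQ a b c d e f"
      by (auto simp: QQ_def)
    note g = gQ_good[OF x(1,2)]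
    have "Q \<in> parts333" using part_iff[OF L g[THEN conjunct1]] g x(3) by simp
    moreover have "adj333 (image L ` R0) Q" using adj_iff[OF L(1) R0G g[THEN conjunct1]] g x(3) by simp
    ultimately show "Q \<in> {Q\<in>parts333. adj333 (image L ` R0) Q}" by simp
  qed
  show "{Q\<in>parts333. adj333 (image L ` R0) Q} \<subseteq> (\<lambda>x. image L ` QQ x) ` (Perms \<times> Perms)"
  proof
    fix Q assume Q: "Q \<in> {Q\<in>parts333. adj333 (image L ` R0) Q}"
    define L' where "L' = the_inv_into G L"
    define R where "R = image L' ` Q"
    have Qsub: "\<And>d. d \<in> Q \<Longrightarrow> d \<subseteq> L ` G" using Q L(2) unfolding parts333_def by auto
    have RG: "R \<subseteq> Pow G" unfolding R_def L'_def using Qsub the_inv_into_into[OF L(1)] by blast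
    have bkw: "\<And>d. d \<in> Q \<Longrightarrow> L ` (L' ` d) = d"
    proof -
      fix d assume "d \<in> Q"
      then have "d \<subseteq> L ` G" by (rule Qsub)
      then have h: "L (L' x) = x" if "x \<in> d" for x
        unfolding L'_def using f_the_inv_into_f[OF L(1)] that by (meson subsetD)
      have "L ` (L' ` d) = (\<lambda>x. x) ` d" unfolding image_image by (rule image_cong[OF refl h])
      then show "L ` (L' ` d) = d" by simp
    qed
    have "image L ` R = (\<lambda>d. L ` (L' ` d)) ` Q" unfolding R_def by (rule image_image)
    also have "\<dots> = (\<lambda>x. x) ` Q" by (rule image_cong[OF refl bkw])
    finally have "image L ` R = (\<lambda>x. x) ` Q" .
    then have QR: "Q = image L ` R" by simp
    have gp: "gpart R" using part_iff[OF L RG] Q QR by simp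
    have ga: "\<forall>x\<in>R0. \<forall>y\<in>R. card (x \<inter> y) = 1" using adj_iff[OF L(1) R0G RG] Q QR by simp
    obtain x where "x \<in> Perms \<times> Perms" "R = QQ x" using grid_char[OF RG gp ga] by blast
    then show "Q \<in> (\<lambda>x. image L ` QQ x) ` (Perms \<times> Perms)" using QR by blast
  qed
qed


lemma QQ_sub: "x \<in> Perms \<times> Perms \<Longrightarrow> QQ x \<subseteq> Pow G"
proof -
  assume x: "x \<in> Perms \<times> Perms"
  obtain a b c d e f where xx: "x = ((a,b,c),(d,e,f))" by (cases x) auto
  have "(a,b,c) \<in> Perms" "(d,e,f) \<in> Perms" using x xx by auto
  from gQ_good[OF this] show ?thesis unfolding xx QQ_def by simp
qed

lemma eig:
  assumes e: "e \<in> pairs9"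
  shows "adjA (colMJ e) = (\<lambda>P. (-12) * colMJ e P)"
proof (rule ext)
  fix P
  show "adjA (colMJ e) P = -12 * colMJ e P"
  proof (cases "P \<in> parts333")
    case False then show ?thesis by (simp add: adjA_def colMJ_def)
  next
    case True
    obtain L where L: "inj_on L G" "L ` G = {1..9}" "P = image L ` R0" using obtainL[OF True] by blast
    obtain p q where pq: "p \<in> G" "q \<in> G" "p \<noteq> q" "e = L ` {p,q}" using obtain_pq[OF e L(2)] by blast
    have R0G: "R0 \<subseteq> Pow G" by (auto simp: R0_def G_def)
    have injF: "inj_on (\<lambda>x. image L ` QQ x) (Perms \<times> Perms)"
    proof -
      have i1: "inj_on (image (image L)) (Pow (Pow G))" by (intro inj_on_image_Pow) (rule L(1))
      have "QQ ` (Perms \<times> Perms) \<subseteq> Pow (Pow G)" using QQ_sub by blast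
      then have "inj_on (image (image L)) (QQ ` (Perms \<times> Perms))" using inj_on_subset[OF i1] by blast
      then have "inj_on (image (image L) \<circ> QQ) (Perms \<times> Perms)" by (rule comp_inj_on[OF QQ_inj])
      then show ?thesis by (simp add: comp_def)
    qed
    have "adjA (colMJ e) P = (\<Sum>Q\<in>{Q\<in>parts333. adj333 P Q}. Mentry Q e - 1/4)"
      by (simp add: adjA_def colMJ_def True)
    also have "\<dots> = (\<Sum>x\<in>Perms \<times> Perms. Mentry (image L ` QQ x) e - 1/4)"
      unfolding L(3) nbr[OF L(1,2)] by (simp add: sum.reindex[OF injF])
    also have "\<dots> = (\<Sum>x\<in>Perms \<times> Perms. gM (QQ x) p q - 1/4)"
      unfolding pq(4) using Mentry_tr[OF L(1) QQ_sub pq(1,2)] by (intro sum.cong refl) simp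
    also have "\<dots> = -12 * (gM R0 p q - 1/4)" by (rule concrete[OF pq(1-3)])
    also have "\<dots> = -12 * colMJ e P"
      unfolding colMJ_def using True Mentry_tr[OF L(1) R0G pq(1,2)] by (simp add: L(3) pq(4))
    finally show ?thesis .
  qed
qed


theorem mainTheorem3:
  shows "(\<forall>e\<in>pairs9. colMJ e \<noteq> 0 \<and> adjA (colMJ e) = (\<lambda>P. (-12) * colMJ e P))
         \<and> vector_space.dim (\<lambda>(r::real) (f::nat set set \<Rightarrow> real) x. r * f x) (colMJ ` pairs9) = 27"
proof (intro conjI ballI)
  fix e assume e: "e \<in> pairs9"
  show "adjA (colMJ e) = (\<lambda>P. (-12) * colMJ e P)" by (rule eig[OF e])
  show "colMJ e \<noteq> 0"
  proof
    assume "colMJ e = 0"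
    then have "colMJ e {{1,4,5},{2,3,6},{7,8,9}} = 0" by simp
    then show False using PP0 unfolding colMJ_def Mentry_def by (simp split: if_splits)
  qed
next
  show "vector_space.dim (\<lambda>(r::real) (f::nat set set \<Rightarrow> real) x. r * f x) (colMJ ` pairs9) = 27"
    by (rule dim27)
qed

end
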